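(* Let $S\subset\mathbb R^2$ be nonempty, compact and symmetric ($S=-S$). Consider the zero-sum game in which both players choose points of $S$ and Player II receives $K$ from Player I, with mixed strategies being Borel probability measures on $S$ and $K(F_1,F_2)=\int_S\int_S K(\mathbf a,\mathbf b)\,dF_1(\mathbf a)\,dF_2(\mathbf b)$. Then this game has a value and the value is $0$, i.e. $\inf_{F_1}\sup_{F_2}K(F_1,F_2)=\sup_{F_2}\inf_{F_1}K(F_1,F_2)=0$.
   Context: Standing setup. Fix $\sigma_x,\sigma_y>0$ and $\rho\in(-1,1)$, and let $(\xi,\eta)$ be a bivariate normal random vector with mean $(0,0)$ and covariance matrix $\Sigma=\begin{pmatrix}\sigma_x^2&\rho\sigma_x\sigma_y\\ \rho\sigma_x\sigma_y&\sigma_y^2\end{pmatrix}$. Player I (the minimizer) chooses $\mathbf a=(x_1,y_1)\in\mathbb R^2$ and Player II (the maximizer) chooses $\mathbf b=(x_2,y_2)\in\mathbb R^2$. Let $C_1(\mathbf a,\mathbf b)=\{(x,y):(x_1-x)^2+(y_1-y)^2<(x_2-x)^2+(y_2-y)^2\}$ and $C_2(\mathbf a,\mathbf b)=\{(x,y):(x_1-x)^2+(y_1-y)^2>(x_2-x)^2+(y_2-y)^2\}$. The payoff to Player II (paid by Player I) is $K(\mathbf a,\mathbf b)=x_1+y_1$ if $\mathbf a=\mathbf b$, and $K(\mathbf a,\mathbf b)=(x_1+y_1)\,P((\xi,\eta)\in C_1(\mathbf a,\mathbf b))+(x_2+y_2)\,P((\xi,\eta)\in C_2(\mathbf a,\mathbf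 b))$ if $\mathbf a\neq\mathbf b$. For $\mathbf a=(x,y)$ write $-\mathbf a=(-x,-y)$. *)

theory Defs
  imports "HOL-Probability.Probability"
begin

definition binorm_density :: "real \<Rightarrow> real \<Rightarrow> real \<Rightarrow> real \<times> real \<Rightarrow> real" where
  "binorm_density sx sy r = (\<lambda>(x, y).
     exp (- (x\<^sup>2 / sx\<^sup>2 - 2 * r * x * y / (sx * sy) + y\<^sup>2 / sy\<^sup>2) / (2 * (1 - r\<^sup>2)))
     / (2 * pi * sx * sy * sqrt (1 - r\<^sup>2)))"

definition binorm :: "real \<Rightarrow> real \<Rightarrow> real \<Rightarrow> (real \<times> real) measure" where
  "binorm sx sy r = density lborel (\<lambda>z. ennreal (binorm_density sx sy r z))"

definition cell1 :: "real \<times> real \<Rightarrow> real \<times> real \<Rightarrow> (real \<times> real) set" where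
  "cell1 a b = {(x, y). (fst a - x)\<^sup>2 + (snd a - y)\<^sup>2 < (fst b - x)\<^sup>2 + (snd b - y)\<^sup>2}"

definition cell2 :: "real \<times> real \<Rightarrow> real \<times> real \<Rightarrow> (real \<times> real) set" where
  "cell2 a b = {(x, y). (fst a - x)\<^sup>2 + (snd a - y)\<^sup>2 > (fst b - x)\<^sup>2 + (snd b - y)\<^sup>2}"

text \<open>Payoff to Player II (maximizer); a is Player I's point, b is Player II's point.\<close>
definition payoff :: "real \<Rightarrow> real \<Rightarrow> real \<Rightarrow> real \<times> real \<Rightarrow> real \<times> real \<Rightarrow> real" where
  "payoff sx sy r a b =
     (if a = b then fst a + snd a
      else (fst a + snd a) * measure (binorm sx sy r) (cell1 a b)
         + (fst b + snd b) * measure (binorm sx sy r) (cell2 a b))"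

definition mixed_strategies :: "(real \<times> real) set \<Rightarrow> (real \<times> real) measure set" where
  "mixed_strategies S = {M. prob_space M \<and> sets M = sets (restrict_space borel S)}"

definition mixed_payoff :: "real \<Rightarrow> real \<Rightarrow> real \<Rightarrow> (real \<times> real) measure \<Rightarrow> (real \<times> real) measure \<Rightarrow> real" where
  "mixed_payoff sx sy r F1 F2 = (\<integral>b. (\<integral>a. payoff sx sy r a b \<partial>F1) \<partial>F2)"

end

theory Submission
  imports Defs
begin


definition stratset :: "'a set \<Rightarrow> ('a \<Rightarrow> real) set" where
  "stratset I = {x. (\<forall>i. 0 \<le> x i) \<and> (\<forall>i. i \<notin> I \<longrightarrow> x i = 0) \<and> sum x I = 1}"

definition saddle :: "'a set \<Rightarrow> 'a set \<Rightarrow> ('a \<Rightarrow> 'a \<Rightarrow> real) \<Rightarrow> bool" where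
  "saddle I J A \<longleftrightarrow> (\<exists>x\<in>stratset I. \<exists>y\<in>stratset J. \<exists>v.
      (\<forall>j\<in>J. v \<le> (\<Sum>i\<in>I. x i * A i j)) \<and> (\<forall>i\<in>I. (\<Sum>j\<in>J. A i j * y j) \<le> v))"

lemma saddle_transpose: "saddle I J A \<Longrightarrow> saddle J I (\<lambda>j i. - A i j)"
  unfolding saddle_def
proof (elim bexE exE conjE)
  fix x y v assume x: "x \<in> stratset I" and y: "y \<in> stratset J"
    and 1: "\<forall>j\<in>J. v \<le> (\<Sum>i\<in>I. x i * A i j)" and 2: "\<forall>i\<in>I. (\<Sum>j\<in>J. A i j * y j) \<le> v"
  show "\<exists>x\<in>stratset J. \<exists>y\<in>stratset I. \<exists>v. (\<forall>j\<in>I. v \<le> (\<Sum>i\<in>J. x i * - A j i)) \<and> (\<forall>i\<in>J. (\<Sum>j\<in>I. - A j i * y j) \<le> v)"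
  proof (intro bexI exI conjI ballI)
    fix j assume "j \<in> I"
    then show "- v \<le> (\<Sum>i\<in>J. y i * - A j i)" using 2
      by (simp add: sum_negf mult.commute)
  next
    fix i assume "i \<in> J"
    then show "(\<Sum>j\<in>I. - A j i * x j) \<le> - v" using 1
      by (simp add: sum_negf mult.commute)
  qed (use x y in auto)
qed

lemma stratset_le1: "x \<in> stratset I \<Longrightarrow> finite I \<Longrightarrow> x i \<le> 1"
  unfolding stratset_def
  by (cases "i \<in> I") (auto intro: member_le_sum[where f=x and A=I, THEN order.trans])

lemma stratset_compact:
  assumes "finite I" shows "compact (stratset I)"
proof -
  let ?P = "PiE UNIV (\<lambda>i. if i \<in> I then {0..1::real} else {0})"
  have "compactin (product_topology (\<lambda>i. euclidean) UNIV) ?P"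
    by (subst compactin_PiE) auto
  then have c: "compact ?P"
    by (simp add: euclidean_product_topology)
  have cl: "closed {x::'a\<Rightarrow>real. sum x I = 1}"
    by (intro closed_Collect_eq continuous_intros) (auto intro: continuous_on_product_coordinates)
  have "stratset I = ?P \<inter> {x. sum x I = 1}"
    using stratset_le1[OF _ assms] by (auto simp: stratset_def PiE_iff split: if_splits) (metis order.refl)
  then show ?thesis using compact_Int_closed[OF c cl] by simp
qed

lemma stratset_nonempty: "i0 \<in> I \<Longrightarrow> finite I \<Longrightarrow> (\<lambda>i. if i = i0 then 1 else 0) \<in> stratset I"
  unfolding stratset_def by auto

lemma stratset_comb:
  assumes "x \<in> stratset I" "y \<in> stratset I" "0 \<le> t" "t \<le> 1"
  shows "(\<lambda>i. t * x i + (1 - t) * y i) \<in> stratset I"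
  using assms unfolding stratset_def by (auto simp: sum.distrib sum_distrib_left[symmetric])

lemma col_comb: fixes A :: "'a \<Rightarrow> 'b \<Rightarrow> real" shows "(\<Sum>i\<in>I. (t * x1 i + (1 - t) * x0 i) * A i j)
   = t * (\<Sum>i\<in>I. x1 i * A i j) + (1 - t) * (\<Sum>i\<in>I. x0 i * A i j)"
proof -
  have "(\<Sum>i\<in>I. (t * x1 i + (1 - t) * x0 i) * A i j) = (\<Sum>i\<in>I. t * (x1 i * A i j) + (1 - t) * (x0 i * A i j))"
    by (intro sum.cong) (auto simp: algebra_simps)
  also have "\<dots> = t * (\<Sum>i\<in>I. x1 i * A i j) + (1 - t) * (\<Sum>i\<in>I. x0 i * A i j)"
    by (simp add: sum.distrib sum_distrib_left)
  finally show ?thesis .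
qed

lemma colcase:
  assumes fI: "finite I" and fJ: "finite J"
  and x0: "x0 \<in> stratset I" and x0v: "\<forall>j\<in>J. v \<le> (\<Sum>i\<in>I. x0 i * A i j)"
  and nobetter: "\<forall>x\<in>stratset I. \<exists>j\<in>J. (\<Sum>i\<in>I. x i * A i j) \<le> v"
  and wmin: "\<forall>y\<in>stratset J. \<exists>i\<in>I. w \<le> (\<Sum>j\<in>J. A i j * y j)"
  and vw: "v < w" and k: "k \<in> J" and kv: "v < (\<Sum>i\<in>I. x0 i * A i k)"
  and sad: "saddle I (J - {k}) A"
  shows False
proof -
  from sad obtain x1 y1 v' where x1: "x1 \<in> stratset I" and y1: "y1 \<in> stratset (J - {k})"
    and c1: "\<forall>j\<in>J - {k}. v' \<le> (\<Sum>i\<in>I. x1 i * A i j)"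
    and r1: "\<forall>i\<in>I. (\<Sum>j\<in>J - {k}. A i j * y1 j) \<le> v'"
    unfolding saddle_def by blast
  have y1k: "y1 k = 0" using y1 by (simp add: stratset_def)
  have sumeq: "(\<Sum>j\<in>J. g j * y1 j) = (\<Sum>j\<in>J - {k}. g j * y1 j)" for g
    using sum.remove[OF fJ k, of "\<lambda>j. g j * y1 j"] y1k by simp
  have "y1 \<in> stratset J"
    using y1 y1k sum.remove[OF fJ k, of y1] unfolding stratset_def by auto
  with wmin obtain i where "i \<in> I" "w \<le> (\<Sum>j\<in>J. A i j * y1 j)" by blast
  with r1 sumeq[of "A i"] have wv': "w \<le> v'" by auto
  define C where "C = \<bar>(\<Sum>i\<in>I. x1 i * A i k) - (\<Sum>i\<in>I. x0 i * A i k)\<bar> + 1"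
  define d where "d = (\<Sum>i\<in>I. x0 i * A i k) - v"
  define t where "t = min (1/2) (d / (2 * C))"
  have Cpos: "C > 0" and dpos: "d > 0" using kv by (auto simp: C_def d_def)
  have tpos: "t > 0" using Cpos dpos by (simp add: t_def)
  have t1: "t \<le> 1" by (simp add: t_def)
  have tC: "t * C \<le> d / 2" using Cpos dpos
    by (simp add: t_def min_def field_simps)
  define xt where "xt = (\<lambda>i. t * x1 i + (1 - t) * x0 i)"
  have "xt \<in> stratset I" unfolding xt_def using stratset_comb[OF x1 x0] tpos t1 by auto
  with nobetter obtain j where j: "j \<in> J" "(\<Sum>i\<in>I. xt i * A i j) \<le> v" by blast
  have eq: "(\<Sum>i\<in>I. xt i * A i j) = t * (\<Sum>i\<in>I. x1 i * A i j) + (1 - t) * (\<Sum>i\<in>I. x0 i * A i j)"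
    unfolding xt_def by (rule col_comb)
  show False
  proof (cases "j = k")
    case True
    let ?a = "(\<Sum>i\<in>I. x1 i * A i k)" and ?b = "(\<Sum>i\<in>I. x0 i * A i k)"
    have "t * (?a - ?b) \<ge> - (t * C)"
    proof -
      have "\<bar>t * (?a - ?b)\<bar> \<le> t * C" using tpos by (simp add: abs_mult C_def)
      then show ?thesis by linarith
    qed
    then have "t * ?a + (1 - t) * ?b \<ge> ?b - d/2" using tC by (simp add: algebra_simps)
    then show False using j(2)[unfolded True] eq[unfolded True] dpos unfolding d_def by argo
  next
    case False
    with j c1 have "v' \<le> (\<Sum>i\<in>I. x1 i * A i j)" by auto
    moreover have "v \<le> (\<Sum>i\<in>I. x0 i * A i j)" using x0v j by auto
    ultimately have "t * v' + (1 - t) * v \<le> (\<Sum>i\<in>I. xt i * A i j)"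
      unfolding eq using tpos t1 by (intro add_mono mult_left_mono) auto
    moreover have "t * v' + (1 - t) * v > v" using tpos wv' vw
      by (simp add: algebra_simps)
    ultimately show False using j by linarith
  qed
qed

lemma stratset_avg_ge:
  assumes "z \<in> stratset J" "\<forall>j\<in>J. c \<le> g j"
  shows "c \<le> (\<Sum>j\<in>J. z j * g j)"
proof -
  have "(\<Sum>j\<in>J. z j * c) \<le> (\<Sum>j\<in>J. z j * g j)"
    using assms by (intro sum_mono mult_left_mono) (auto simp: stratset_def)
  moreover have "(\<Sum>j\<in>J. z j * c) = c" using assms(1)
    by (simp add: stratset_def sum_distrib_right[symmetric])
  ultimately show ?thesis by simp
qed

lemma stratset_avg_le:
  assumes "z \<in> stratset J" "\<forall>j\<in>J. g j \<le> c"
  shows "(\<Sum>j\<in>J. z j * g j) \<le> c"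
proof -
  have "(\<Sum>j\<in>J. z j * g j) \<le> (\<Sum>j\<in>J. z j * c)"
    using assms by (intro sum_mono mult_left_mono) (auto simp: stratset_def)
  moreover have "(\<Sum>j\<in>J. z j * c) = c" using assms(1)
    by (simp add: stratset_def sum_distrib_right[symmetric])
  ultimately show ?thesis by simp
qed

lemma continuous_on_Min_family:
  fixes f :: "'j \<Rightarrow> 'a::topological_space \<Rightarrow> real"
  assumes "finite J" "J \<noteq> {}" "\<And>j. continuous_on S (f j)"
  shows "continuous_on S (\<lambda>x. Min ((\<lambda>j. f j x) ` J))"
  using assms(1,2)
proof (induction J rule: finite_ne_induct)
  case (singleton j) then show ?case using assms(3) by simp
next
  case (insert j F)
  then show ?case using assms(3) by (simp add: Min_insert continuous_on_min)
qed

lemma continuous_on_Max_family: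
  fixes f :: "'j \<Rightarrow> 'a::topological_space \<Rightarrow> real"
  assumes "finite J" "J \<noteq> {}" "\<And>j. continuous_on S (f j)"
  shows "continuous_on S (\<lambda>x. Max ((\<lambda>j. f j x) ` J))"
  using assms(1,2)
proof (induction J rule: finite_ne_induct)
  case (singleton j) then show ?case using assms(3) by simp
next
  case (insert j F)
  then show ?case using assms(3) by (simp add: Max_insert continuous_on_max)
qed

lemma minimax_finite:
  fixes A :: "'a \<Rightarrow> 'a \<Rightarrow> real"
  shows "finite I \<Longrightarrow> I \<noteq> {} \<Longrightarrow> finite J \<Longrightarrow> J \<noteq> {} \<Longrightarrow> saddle I J A"
proof (induction "card I + card J" arbitrary: I J rule: less_induct)
  case less
  note fI = less.prems(1) and neI = less.prems(2) and fJ = less.prems(3) and neJ = less.prems(4)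
  define col where "col x j = (\<Sum>i\<in>I. x i * A i j)" for x j
  define row where "row y i = (\<Sum>j\<in>J. A i j * y j)" for y i
  define phi where "phi x = Min ((\<lambda>j. col x j) ` J)" for x
  define psi where "psi y = Max ((\<lambda>i. row y i) ` I)" for y
  have cphi: "continuous_on UNIV phi" unfolding phi_def col_def
    by (intro continuous_on_Min_family fJ neJ continuous_intros continuous_on_product_coordinates)
  have cpsi: "continuous_on UNIV psi" unfolding psi_def row_def
    by (intro continuous_on_Max_family fI neI continuous_intros continuous_on_product_coordinates)
  obtain i0 where "i0 \<in> I" using neI by auto
  then have neSI: "stratset I \<noteq> {}" using stratset_nonempty[OF _ fI] by blast
  obtain j0 where "j0 \<in> J" using neJ by auto
  then have neSJ: "stratset J \<noteq> {}" using stratset_nonempty[OF _ fJ] by blast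
  obtain x0 where x0: "x0 \<in> stratset I" and x0max: "\<forall>x\<in>stratset I. phi x \<le> phi x0"
    using continuous_attains_sup[OF stratset_compact[OF fI] neSI continuous_on_subset[OF cphi]] by blast
  obtain y0 where y0: "y0 \<in> stratset J" and y0min: "\<forall>y\<in>stratset J. psi y0 \<le> psi y"
    using continuous_attains_inf[OF stratset_compact[OF fJ] neSJ continuous_on_subset[OF cpsi]] by blast
  define v where "v = phi x0"
  define w where "w = psi y0"
  have x0v: "\<forall>j\<in>J. v \<le> col x0 j" unfolding v_def phi_def using fJ by auto
  have nobetter: "\<forall>x\<in>stratset I. \<exists>j\<in>J. col x j \<le> v"
  proof
    fix x assume "x \<in> stratset I"
    then have "phi x \<le> v" using x0max v_def by auto
    moreover have "phi x \<in> (\<lambda>j. col x j) ` J" unfolding phi_def using fJ neJ by (intro Min_in) auto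
    ultimately show "\<exists>j\<in>J. col x j \<le> v" by auto
  qed
  have y0w: "\<forall>i\<in>I. row y0 i \<le> w" unfolding w_def psi_def using fI by auto
  have wmin: "\<forall>y\<in>stratset J. \<exists>i\<in>I. w \<le> row y i"
  proof
    fix y assume "y \<in> stratset J"
    then have "w \<le> psi y" using y0min w_def by auto
    moreover have "psi y \<in> (\<lambda>i. row y i) ` I" unfolding psi_def using fI neI by (intro Max_in) auto
    ultimately show "\<exists>i\<in>I. w \<le> row y i" by auto
  qed
  have bil: "(\<Sum>j\<in>J. y0 j * col x0 j) = (\<Sum>i\<in>I. x0 i * row y0 i)"
    unfolding col_def row_def sum_distrib_left
    by (subst sum.swap) (simp add: algebra_simps)
  have vle: "v \<le> (\<Sum>j\<in>J. y0 j * col x0 j)" by (rule stratset_avg_ge[OF y0 x0v])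
  have wge: "(\<Sum>i\<in>I. x0 i * row y0 i) \<le> w" by (rule stratset_avg_le[OF x0 y0w])
  show ?case
  proof (cases "v = w")
    case True
    show ?thesis unfolding saddle_def
      using x0 y0 x0v y0w True unfolding col_def row_def by blast
  next
    case False
    with vle wge bil have vw: "v < w" by linarith
    show ?thesis
    proof (cases "\<exists>k\<in>J. v < col x0 k")
      case True
      then obtain k where k: "k \<in> J" "v < col x0 k" by blast
      have "J - {k} \<noteq> {}"
      proof
        assume "J - {k} = {}"
        then have "J = {k}" using k by auto
        with nobetter x0 k show False by auto
      qed
      moreover have "card I + card (J - {k}) < card I + card J"
        using card_Diff1_less[OF fJ k(1)] by linarith
      ultimately have "saddle I (J - {k}) A" using less fI neI fJ by auto
      from colcase[OF fI fJ x0 x0v[unfolded col_def] nobetter[unfolded col_def]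
          wmin[unfolded row_def] vw k(1) k(2)[unfolded col_def] this]
      show ?thesis ..
    next
      case notcol: False
      show ?thesis
      proof (cases "\<exists>i\<in>I. row y0 i < w")
        case True
        then obtain i where i: "i \<in> I" "row y0 i < w" by blast
        have "I - {i} \<noteq> {}"
        proof
          assume "I - {i} = {}"
          then have "I = {i}" using i by auto
          with wmin y0 i show False by auto
        qed
        moreover have "card (I - {i}) + card J < card I + card J"
          using card_Diff1_less[OF fI i(1)] by linarith
        ultimately have "saddle (I - {i}) J A" using less fI neJ fJ by auto
        then have sadT: "saddle J (I - {i}) (\<lambda>j i. - A i j)" by (rule saddle_transpose)
        have a1: "\<forall>j\<in>I. - w \<le> (\<Sum>i\<in>J. y0 i * - A j i)"
          using y0w unfolding row_def by (auto simp: sum_negf mult.commute)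
        have a2: "\<forall>y\<in>stratset J. \<exists>j\<in>I. (\<Sum>i\<in>J. y i * - A j i) \<le> - w"
          using wmin unfolding row_def by (force simp: sum_negf mult.commute)
        have a3: "\<forall>x\<in>stratset I. \<exists>i\<in>J. - v \<le> (\<Sum>j\<in>I. - A j i * x j)"
          using nobetter unfolding col_def by (force simp: sum_negf mult.commute)
        have a4: "- w < (\<Sum>i'\<in>J. y0 i' * - A i i')"
          using i unfolding row_def by (simp add: sum_negf mult.commute)
        from colcase[OF fJ fI y0 a1 a2 a3 _ i(1) a4 sadT] vw show ?thesis by simp
      next
        case False
        have "\<forall>i\<in>I. w \<le> row y0 i" using False by auto
        then have W: "w \<le> (\<Sum>i\<in>I. x0 i * row y0 i)" by (rule stratset_avg_ge[OF x0])
        have "\<forall>j\<in>J. col x0 j \<le> v" using notcol by auto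
        then have "(\<Sum>j\<in>J. y0 j * col x0 j) \<le> v" by (rule stratset_avg_le[OF y0])
        with W show ?thesis using bil vw by linarith
      qed
    qed
  qed
qed



lemma binorm_factor:
  assumes sx: "sx > 0" and sy: "sy > 0" and r1: "-1 < r" and r2: "r < 1"
  shows "binorm_density sx sy r (x, y) =
     normal_density (r * sx * y / sy) (sx * sqrt (1 - r\<^sup>2)) x * normal_density 0 sy y"
proof -
  define q where "q = sqrt (1 - r\<^sup>2)"
  have r2': "r\<^sup>2 < 1" using r1 r2 by (simp add: abs_square_less_1)
  have q: "q > 0" "q\<^sup>2 = 1 - r\<^sup>2" using r2' by (auto simp: q_def)
  have s1: "sqrt (2 * pi * (sx * q)\<^sup>2) = sqrt (2 * pi) * sx * q"
    using sx q by (simp add: real_sqrt_mult power_mult_distrib q_def)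
  have s2: "sqrt (2 * pi * sy\<^sup>2) = sqrt (2 * pi) * sy"
    using sy by (simp add: real_sqrt_mult)
  have sp: "sqrt (2 * pi) * sqrt (2 * pi) = 2 * pi" by simp
  have ex: "- (x - r * sx * y / sy)\<^sup>2 / (2 * (sx * q)\<^sup>2) + - (y - 0)\<^sup>2 / (2 * sy\<^sup>2)
      = - (x\<^sup>2 / sx\<^sup>2 - 2 * r * x * y / (sx * sy) + y\<^sup>2 / sy\<^sup>2) / (2 * (1 - r\<^sup>2))"
  proof -
    have e: "(sx * q)\<^sup>2 = sx\<^sup>2 * (1 - r\<^sup>2)" using q by (simp add: power_mult_distrib)
    have nz: "1 - r\<^sup>2 \<noteq> 0" using r2' by simp
    show ?thesis unfolding e using sx sy nz
      by (simp add: field_simps power2_eq_square)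
  qed
  have gen: "1 / (sqrt (2 * pi) * sx * q) * exp a * (1 / (sqrt (2 * pi) * sy) * exp b)
      = exp (a + b) / (2 * pi * sx * sy * q)" for a b
    using sx sy q sp by (simp add: exp_add field_simps)
  show ?thesis
    unfolding binorm_density_def normal_density_def q_def[symmetric] s1 s2
    by (simp only: gen ex split)
qed

interpretation pl: pair_sigma_finite "lborel :: real measure" "lborel :: real measure" ..

lemma normal_mass:
  assumes "s > 0" shows "(\<integral>\<^sup>+x. ennreal (normal_density m s x) \<partial>lborel) = 1"
proof -
  have "emeasure (density lborel (\<lambda>x. ennreal (normal_density m s x))) UNIV = 1"
    using prob_space.emeasure_space_1[OF prob_space_normal_density[OF assms]] by simp
  then show ?thesis by (simp add: emeasure_density)
qed

lemma binorm_density_measurable2[measurable]: "binorm_density sx sy r \<in> borel_measurable (borel \<Otimes>\<^sub>M borel)"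
  unfolding binorm_density_def by measurable

lemma binorm_density_measurable[measurable]: "binorm_density sx sy r \<in> borel_measurable borel"
  unfolding binorm_density_def borel_prod[symmetric] by measurable

lemma binorm_density_nonneg:
  assumes "sx > 0" "sy > 0" "-1 < r" "r < 1"
  shows "0 \<le> binorm_density sx sy r z"
  using assms by (cases z) (simp add: binorm_factor normal_density_nonneg)

lemma binorm_mass:
  assumes sx: "sx > 0" and sy: "sy > 0" and r1: "-1 < r" and r2: "r < 1"
  shows "emeasure (binorm sx sy r) UNIV = 1"
proof -
  define s1 where "s1 = sx * sqrt (1 - r\<^sup>2)"
  have r2': "r\<^sup>2 < 1" using r1 r2 by (simp add: abs_square_less_1)
  have s1: "s1 > 0" using sx r2' by (simp add: s1_def)
  have "emeasure (binorm sx sy r) UNIV = (\<integral>\<^sup>+z. ennreal (binorm_density sx sy r z) \<partial>lborel)"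
    by (simp add: binorm_def emeasure_density)
  also have "\<dots> = (\<integral>\<^sup>+z. ennreal (binorm_density sx sy r z) \<partial>(lborel \<Otimes>\<^sub>M lborel))"
    by (simp add: lborel_prod)
  also have "\<dots> = (\<integral>\<^sup>+y. (\<integral>\<^sup>+x. ennreal (binorm_density sx sy r (x, y)) \<partial>lborel) \<partial>lborel)"
    by (rule pair_sigma_finite.nn_integral_snd[symmetric]) (unfold_locales, measurable)
  also have "\<dots> = (\<integral>\<^sup>+y. ennreal (normal_density 0 sy y) \<partial>lborel)"
  proof (rule nn_integral_cong)
    fix y :: real
    have "(\<integral>\<^sup>+x. ennreal (binorm_density sx sy r (x, y)) \<partial>lborel)
        = (\<integral>\<^sup>+x. ennreal (normal_density (r * sx * y / sy) s1 x) * ennreal (normal_density 0 sy y) \<partial>lborel)"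
      using assms by (intro nn_integral_cong) (simp add: binorm_factor s1_def ennreal_mult normal_density_nonneg)
    also have "\<dots> = (\<integral>\<^sup>+x. ennreal (normal_density (r * sx * y / sy) s1 x) \<partial>lborel) * ennreal (normal_density 0 sy y)"
      by (rule nn_integral_multc) measurable
    also have "\<dots> = ennreal (normal_density 0 sy y)" using normal_mass[OF s1] by simp
    finally show "(\<integral>\<^sup>+x. ennreal (binorm_density sx sy r (x, y)) \<partial>lborel) = ennreal (normal_density 0 sy y)" .
  qed
  also have "\<dots> = 1" by (rule normal_mass[OF sy])
  finally show ?thesis .
qed



lemma sets_binorm[simp, measurable_cong]: "sets (binorm sx sy r) = sets borel"
  by (simp add: binorm_def)

lemma space_binorm[simp]: "space (binorm sx sy r) = UNIV"
  by (simp add: binorm_def)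

lemma binorm_prob:
  assumes "sx > 0" "sy > 0" "-1 < r" "r < 1"
  shows "prob_space (binorm sx sy r)"
  by (rule prob_spaceI) (simp add: binorm_mass[OF assms])

lemma binorm_density_uminus: "binorm_density sx sy r (- z) = binorm_density sx sy r z"
  by (cases z) (simp add: binorm_density_def)

lemma lborel_distr_uminus2: "distr lborel borel uminus = (lborel :: (real \<times> real) measure)"
proof -
  have "(lborel :: (real \<times> real) measure) = density (distr lborel borel (\<lambda>x. 0 + (-1::real) *\<^sub>R x)) (\<lambda>_. \<bar>-1::real\<bar> ^ DIM(real \<times> real))"
    by (rule lborel_affine) simp
  then show ?thesis by (simp add: density_1)
qed

lemma binorm_uminus:
  assumes A: "A \<in> sets borel"
  shows "emeasure (binorm sx sy r) (uminus -` A) = emeasure (binorm sx sy r) A"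
proof -
  have um: "(uminus :: real \<times> real \<Rightarrow> _) \<in> borel_measurable borel"
    by (intro borel_measurable_continuous_onI continuous_intros)
  have Am: "uminus -` A \<in> sets borel" using measurable_sets[OF um A] by simp
  have "emeasure (binorm sx sy r) (uminus -` A) = (\<integral>\<^sup>+z. ennreal (binorm_density sx sy r z) * indicator (uminus -` A) z \<partial>lborel)"
    using Am by (simp add: binorm_def emeasure_density)
  also have "\<dots> = (\<integral>\<^sup>+z. ennreal (binorm_density sx sy r (- z)) * indicator A (- z) \<partial>lborel)"
    by (simp add: binorm_density_uminus indicator_def)
  also have "\<dots> = (\<integral>\<^sup>+z. ennreal (binorm_density sx sy r z) * indicator A z \<partial>(distr lborel borel uminus))"
    using A by (subst nn_integral_distr) auto
  also have "\<dots> = emeasure (binorm sx sy r) A"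
    using A by (simp add: lborel_distr_uminus2 binorm_def emeasure_density)
  finally show ?thesis .
qed



definition bisector :: "real \<times> real \<Rightarrow> real \<times> real \<Rightarrow> (real \<times> real) set" where
  "bisector a b = {z. (fst a - fst z)\<^sup>2 + (snd a - snd z)\<^sup>2 = (fst b - fst z)\<^sup>2 + (snd b - snd z)\<^sup>2}"

lemma bisector_eq: "bisector a b = {z. (2 *\<^sub>R (b - a)) \<bullet> z = (fst b)\<^sup>2 + (snd b)\<^sup>2 - (fst a)\<^sup>2 - (snd a)\<^sup>2}"
  unfolding bisector_def
  by (auto simp: inner_prod_def power2_eq_square algebra_simps)

lemma bisector_null_lborel:
  assumes "a \<noteq> b" shows "bisector a b \<in> null_sets lborel"
proof -
  have "2 *\<^sub>R (b - a) \<noteq> 0" using assms by simp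
  then have "negligible (bisector a b)" unfolding bisector_eq by (intro negligible_hyperplane) simp
  then have "bisector a b \<in> null_sets lebesgue" by (simp add: negligible_iff_null_sets)
  moreover have "bisector a b \<in> sets borel" unfolding bisector_def
    by (intro borel_closed closed_Collect_eq continuous_intros)
  ultimately show ?thesis
    using null_sets_completion_iff[of "bisector a b" lborel] by simp
qed

lemma bisector_null:
  assumes "a \<noteq> b" shows "bisector a b \<in> null_sets (binorm sx sy r)"
proof -
  have "bisector a b \<in> null_sets (density lborel (\<lambda>z. ennreal (binorm_density sx sy r z)))"
  proof (subst null_sets_density_iff)
    show "(\<lambda>z. ennreal (binorm_density sx sy r z)) \<in> borel_measurable lborel" by measurable
    have "AE z in lborel. z \<notin> bisector a b" by (rule AE_not_in[OF bisector_null_lborel[OF assms]])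
    then have "AE z in lborel. z \<in> bisector a b \<longrightarrow> ennreal (binorm_density sx sy r z) = 0"
      by (rule AE_mp) simp
    then show "bisector a b \<in> sets lborel \<and> (AE z in lborel. z \<in> bisector a b \<longrightarrow> ennreal (binorm_density sx sy r z) = 0)"
      using bisector_null_lborel[OF assms] null_setsD2[OF bisector_null_lborel[OF assms]] by simp
  qed
  then show ?thesis by (simp add: binorm_def)
qed

lemma cell1_alt: "cell1 a b = {z. (fst a - fst z)\<^sup>2 + (snd a - snd z)\<^sup>2 < (fst b - fst z)\<^sup>2 + (snd b - snd z)\<^sup>2}"
  unfolding cell1_def by auto

lemma cell2_alt: "cell2 a b = {z. (fst a - fst z)\<^sup>2 + (snd a - snd z)\<^sup>2 > (fst b - fst z)\<^sup>2 + (snd b - snd z)\<^sup>2}"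
  unfolding cell2_def by auto

lemma cell1_borel[measurable]: "cell1 a b \<in> sets borel"
  unfolding cell1_alt by (intro borel_open open_Collect_less continuous_intros)

lemma cell2_borel[measurable]: "cell2 a b \<in> sets borel"
  unfolding cell2_alt by (intro borel_open open_Collect_less continuous_intros)



lemma cells_sum:
  assumes "sx > 0" "sy > 0" "-1 < r" "r < 1" "a \<noteq> b"
  shows "measure (binorm sx sy r) (cell1 a b) + measure (binorm sx sy r) (cell2 a b) = 1"
proof -
  interpret P: prob_space "binorm sx sy r" by (rule binorm_prob[OF assms(1-4)])
  have U: "(cell1 a b \<union> cell2 a b) \<union> bisector a b = UNIV"
    unfolding cell1_alt cell2_alt bisector_def by auto
  have 1: "P.prob (cell1 a b \<union> cell2 a b) = P.prob (cell1 a b) + P.prob (cell2 a b)"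
    by (rule P.finite_measure_Union) (simp, simp, auto simp: cell1_alt cell2_alt)
  have 2: "P.prob ((cell1 a b \<union> cell2 a b) \<union> bisector a b) = P.prob (cell1 a b \<union> cell2 a b)"
    by (rule measure_Un_null_set) (simp, rule bisector_null[OF assms(5)])
  have 3: "P.prob UNIV = 1" using P.prob_space by simp
  show ?thesis using 1 2 3 unfolding U by simp
qed



definition LL :: "real \<times> real \<Rightarrow> real" where "LL z = fst z + snd z"

definition m1 :: "real \<Rightarrow> real \<Rightarrow> real \<Rightarrow> (real \<times> real) \<times> (real \<times> real) \<Rightarrow> real" where
  "m1 sx sy r p = measure (binorm sx sy r) (cell1 (fst p) (snd p))"

lemma payoff_alt:
  assumes "sx > 0" "sy > 0" "-1 < r" "r < 1"
  shows "payoff sx sy r a b = LL b + (LL a - LL b) * m1 sx sy r (a, b)"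
proof (cases "a = b")
  case True then show ?thesis by (simp add: payoff_def LL_def)
next
  case False
  have "measure (binorm sx sy r) (cell2 a b) = 1 - measure (binorm sx sy r) (cell1 a b)"
    using cells_sum[OF assms False] by simp
  note m2 = this
  show ?thesis unfolding payoff_def LL_def m1_def m2 using False by (simp add: algebra_simps)
qed

lemma cell1_neg: "cell1 (-b) (-a) = uminus -` cell2 a b"
  unfolding cell1_def cell2_def by (auto simp: power2_eq_square algebra_simps)

lemma cell2_neg: "cell2 (-b) (-a) = uminus -` cell1 a b"
  unfolding cell1_def cell2_def by (auto simp: power2_eq_square algebra_simps)

lemma payoff_antisym: "payoff sx sy r (-b) (-a) = - payoff sx sy r a b"
proof (cases "a = b")
  case True then show ?thesis by (simp add: payoff_def)
next
  case False
  then have "-b \<noteq> -a" by simp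
  moreover have "measure (binorm sx sy r) (cell1 (-b) (-a)) = measure (binorm sx sy r) (cell2 a b)"
    unfolding cell1_neg measure_def using binorm_uminus[OF cell2_borel] by simp
  moreover have "measure (binorm sx sy r) (cell2 (-b) (-a)) = measure (binorm sx sy r) (cell1 a b)"
    unfolding cell2_neg measure_def using binorm_uminus[OF cell1_borel] by simp
  ultimately show ?thesis using False by (simp add: payoff_def algebra_simps)
qed

lemma m1_bounds:
  assumes "sx > 0" "sy > 0" "-1 < r" "r < 1"
  shows "0 \<le> m1 sx sy r p" "m1 sx sy r p \<le> 1"
proof -
  interpret P: prob_space "binorm sx sy r" by (rule binorm_prob[OF assms])
  show "0 \<le> m1 sx sy r p" "m1 sx sy r p \<le> 1" by (simp_all add: m1_def)
qed

lemma m1_cont: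
  assumes pos: "sx > 0" "sy > 0" "-1 < r" "r < 1" and ne: "fst p \<noteq> snd p"
  shows "isCont (m1 sx sy r) p"
proof (rule continuous_at_sequentiallyI)
  interpret P: prob_space "binorm sx sy r" by (rule binorm_prob[OF pos])
  fix u assume u: "u \<longlonglongrightarrow> p"
  define g where "g q z = (fst (fst q) - fst z)\<^sup>2 + (snd (fst q) - snd z)\<^sup>2 - ((fst (snd q) - fst z)\<^sup>2 + (snd (snd q) - snd z)\<^sup>2)"
    for q :: "(real \<times> real) \<times> (real \<times> real)" and z :: "real \<times> real"
  have cell: "z \<in> cell1 (fst q) (snd q) \<longleftrightarrow> g q z < 0" for q z
    unfolding cell1_alt g_def by auto
  have bis: "z \<in> bisector (fst p) (snd p) \<longleftrightarrow> g p z = 0" for z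
    unfolding bisector_def g_def by auto
  have gt: "(\<lambda>n. g (u n) z) \<longlonglongrightarrow> g p z" for z
    unfolding g_def by (intro tendsto_intros u)
  have ind: "(\<lambda>n. indicator (cell1 (fst (u n)) (snd (u n))) z :: real) \<longlonglongrightarrow> indicator (cell1 (fst p) (snd p)) z"
    if "z \<notin> bisector (fst p) (snd p)" for z
  proof -
    have "g p z \<noteq> 0" using that bis by auto
    then consider "g p z < 0" | "g p z > 0" by linarith
    then show ?thesis
    proof cases
      case 1
      then have "eventually (\<lambda>n. g (u n) z < 0) sequentially" using order_tendstoD(2)[OF gt[of z]] by simp
      then have "eventually (\<lambda>n. indicator (cell1 (fst (u n)) (snd (u n))) z = (1::real)) sequentially"
        by (rule eventually_mono) (simp add: cell)
      then show ?thesis using 1 by (simp add: cell tendsto_eventually)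
    next
      case 2
      then have "eventually (\<lambda>n. g (u n) z > 0) sequentially" using order_tendstoD(1)[OF gt[of z]] by simp
      then have "eventually (\<lambda>n. indicator (cell1 (fst (u n)) (snd (u n))) z = (0::real)) sequentially"
        by (rule eventually_mono) (simp add: cell)
      then show ?thesis using 2 by (simp add: cell tendsto_eventually)
    qed
  qed
  have "(\<lambda>n. integral\<^sup>L (binorm sx sy r) (indicator (cell1 (fst (u n)) (snd (u n))) :: _ \<Rightarrow> real))
      \<longlonglongrightarrow> integral\<^sup>L (binorm sx sy r) (indicator (cell1 (fst p) (snd p)))"
  proof (rule integral_dominated_convergence[where w="\<lambda>_. 1"])
    show "AE z in binorm sx sy r. (\<lambda>n. indicator (cell1 (fst (u n)) (snd (u n))) z :: real) \<longlonglongrightarrow> indicator (cell1 (fst p) (snd p)) z"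
      using AE_not_in[OF bisector_null[OF ne]] by (rule AE_mp) (auto intro: ind)
  qed (auto simp: indicator_def)
  then show "(\<lambda>n. m1 sx sy r (u n)) \<longlonglongrightarrow> m1 sx sy r p"
    by (simp add: m1_def)
qed

definition PF :: "real \<Rightarrow> real \<Rightarrow> real \<Rightarrow> (real \<times> real) \<times> (real \<times> real) \<Rightarrow> real" where
  "PF sx sy r p = payoff sx sy r (fst p) (snd p)"

lemma PF_cont:
  assumes pos: "sx > 0" "sy > 0" "-1 < r" "r < 1"
  shows "continuous_on UNIV (PF sx sy r)"
proof -
  have PF: "PF sx sy r = (\<lambda>p. LL (snd p) + (LL (fst p) - LL (snd p)) * m1 sx sy r p)"
    by (rule ext) (simp add: PF_def payoff_alt[OF pos])
  have cLL: "isCont LL z" for z unfolding LL_def by (intro continuous_intros)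
  have H: "isCont (\<lambda>p. (LL (fst p) - LL (snd p)) * m1 sx sy r p) p" for p
  proof (cases "fst p = snd p")
    case False
    then show ?thesis
      by (intro continuous_intros m1_cont[OF pos] isCont_o2[OF _ cLL]) auto
  next
    case True
    have lim0: "((\<lambda>q. LL (fst q) - LL (snd q)) \<longlongrightarrow> 0) (at p)"
    proof -
      have "((\<lambda>q. LL (fst q) - LL (snd q)) \<longlongrightarrow> LL (fst p) - LL (snd p)) (at p)"
        unfolding LL_def by (intro tendsto_intros)
      then show ?thesis using True by simp
    qed
    have "((\<lambda>q. (LL (fst q) - LL (snd q)) * m1 sx sy r q) \<longlongrightarrow> 0) (at p)"
    proof (rule Lim_null_comparison)
      show "eventually (\<lambda>q. norm ((LL (fst q) - LL (snd q)) * m1 sx sy r q) \<le> norm (LL (fst q) - LL (snd q))) (at p)"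
        using m1_bounds[OF pos] by (intro always_eventually allI) (simp add: abs_mult mult_left_le)
      show "((\<lambda>q. norm (LL (fst q) - LL (snd q))) \<longlongrightarrow> 0) (at p)"
        using tendsto_norm[OF lim0] by simp
    qed
    then show ?thesis unfolding isCont_def using True by simp
  qed
  have H2: "isCont (\<lambda>p. LL (snd p)) p" for p :: "(real \<times> real) \<times> (real \<times> real)"
    unfolding LL_def by (intro continuous_intros)
  show ?thesis unfolding PF
    by (rule continuous_at_imp_continuous_on, rule ballI, rule isCont_add[OF H2 H])
qed



lemma mixed_space: "F \<in> mixed_strategies S \<Longrightarrow> space F = S"
proof -
  assume "F \<in> mixed_strategies S"
  then have "sets F = sets (restrict_space borel S)" by (simp add: mixed_strategies_def)
  from sets_eq_imp_space_eq[OF this] show "space F = S" by (simp add: space_restrict_space)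
qed

lemma incl_meas: assumes "sets M = sets (restrict_space borel S)" shows "(\<lambda>x. x) \<in> measurable M borel"
proof -
  have "(\<lambda>x. x) \<in> measurable (restrict_space borel S) borel" by (rule measurable_restrict_space1) simp
  then show ?thesis by (subst measurable_cong_sets[OF assms refl])
qed

lemma meas1:
  fixes f :: "real \<times> real \<Rightarrow> real"
  assumes "continuous_on UNIV f" "sets M = sets (restrict_space borel S)"
  shows "f \<in> borel_measurable M"
  using measurable_compose[OF incl_meas[OF assms(2)] borel_measurable_continuous_onI[OF assms(1)]] by simp

lemma meas2:
  fixes g :: "(real \<times> real) \<times> (real \<times> real) \<Rightarrow> real"
  assumes "continuous_on UNIV g" "sets M1 = sets (restrict_space borel S)" "sets M2 = sets (restrict_space borel T)"
  shows "g \<in> borel_measurable (M1 \<Otimes>\<^sub>M M2)"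
proof -
  have g: "g \<in> borel_measurable (borel \<Otimes>\<^sub>M borel)"
    unfolding borel_prod using borel_measurable_continuous_onI[OF assms(1)] .
  have "(\<lambda>p. (fst p, snd p)) \<in> measurable (M1 \<Otimes>\<^sub>M M2) (borel \<Otimes>\<^sub>M borel)"
    by (intro measurable_Pair measurable_compose[OF measurable_fst incl_meas[OF assms(2)]]
          measurable_compose[OF measurable_snd incl_meas[OF assms(3)]])
  from measurable_compose[OF this g] show ?thesis by simp
qed



lemma bound_int:
  fixes f :: "'a \<Rightarrow> real"
  assumes "prob_space M" "\<forall>x\<in>space M. \<bar>f x\<bar> \<le> C"
  shows "\<bar>integral\<^sup>L M f\<bar> \<le> C"
proof -
  interpret prob_space M by fact
  obtain x where "x \<in> space M" using not_empty by blast
  then have C: "C \<ge> 0" using assms(2) by force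
  show ?thesis
  proof (cases "integrable M f")
    case True
    have "\<bar>integral\<^sup>L M f\<bar> \<le> integral\<^sup>L M (\<lambda>x. \<bar>f x\<bar>)"
      using integral_norm_bound[of M f] by simp
    also have "\<dots> \<le> integral\<^sup>L M (\<lambda>x. C)"
      using True assms(2) by (intro integral_mono) auto
    finally show ?thesis using prob_space by simp
  next
    case False then show ?thesis using C by (simp add: not_integrable_integral_eq)
  qed
qed

lemma le_int:
  fixes f :: "'a \<Rightarrow> real"
  assumes "prob_space M" "c \<ge> 0" "\<forall>x\<in>space M. f x \<le> c"
  shows "integral\<^sup>L M f \<le> c"
proof -
  interpret prob_space M by fact
  show ?thesis
  proof (cases "integrable M f")
    case True
    have "integral\<^sup>L M f \<le> integral\<^sup>L M (\<lambda>x. c)"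
      using True assms(3) by (intro integral_mono) auto
    then show ?thesis using prob_space by simp
  next
    case False then show ?thesis using assms(2) by (simp add: not_integrable_integral_eq)
  qed
qed

lemma ge_int:
  fixes f :: "'a \<Rightarrow> real"
  assumes "prob_space M" "c \<ge> 0" "\<forall>x\<in>space M. - c \<le> f x"
  shows "- c \<le> integral\<^sup>L M f"
proof -
  have "integral\<^sup>L M (\<lambda>x. - f x) \<le> c" using assms(3) by (intro le_int[OF assms(1,2)]) auto
  then show ?thesis by simp
qed



definition refl :: "(real \<times> real) set \<Rightarrow> (real \<times> real) measure \<Rightarrow> (real \<times> real) measure" where
  "refl S F = distr F (restrict_space borel S) uminus"

lemma uminus_meas:
  fixes S :: "(real \<times> real) set"
  assumes "sets F = sets (restrict_space borel S)" "uminus ` S = S"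
  shows "uminus \<in> measurable F (restrict_space borel S)"
proof (rule measurable_restrict_space2)
  have "space F = S" using sets_eq_imp_space_eq[OF assms(1)] by (simp add: space_restrict_space)
  then show "uminus \<in> space F \<rightarrow> S" using assms(2) by force
  have c: "continuous_on UNIV (uminus :: real \<times> real \<Rightarrow> real \<times> real)" by (intro continuous_intros)
  have "uminus \<in> measurable (restrict_space borel S) borel"
    by (rule measurable_restrict_space1) (rule borel_measurable_continuous_onI[OF c])
  then show "uminus \<in> borel_measurable F" by (subst measurable_cong_sets[OF assms(1) refl])
qed

lemma refl_in:
  assumes "F \<in> mixed_strategies S" "uminus ` S = S"
  shows "refl S F \<in> mixed_strategies S"
proof -
  have p: "prob_space F" and s: "sets F = sets (restrict_space borel S)"
    using assms(1) by (auto simp: mixed_strategies_def)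
  show ?thesis unfolding mixed_strategies_def refl_def
    using prob_space.prob_space_distr[OF p uminus_meas[OF s assms(2)]] by simp
qed

lemma refl_int:
  fixes h :: "real \<times> real \<Rightarrow> real"
  assumes "F \<in> mixed_strategies S" "uminus ` S = S" "h \<in> borel_measurable (restrict_space borel S)"
  shows "integral\<^sup>L (refl S F) h = (\<integral>x. h (- x) \<partial>F)"
proof -
  have s: "sets F = sets (restrict_space borel S)"
    using assms(1) by (auto simp: mixed_strategies_def)
  from assms(3) show ?thesis unfolding refl_def by (rule integral_distr[OF uminus_meas[OF s assms(2)]])
qed



lemma anti_zero:
  fixes G :: "(real \<times> real) \<times> (real \<times> real) \<Rightarrow> real"
  assumes F: "F \<in> mixed_strategies S" and cG: "continuous_on UNIV G"
    and anti: "\<forall>a\<in>S. \<forall>b\<in>S. G (a, b) = - G (b, a)"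
    and bd: "\<forall>a\<in>S. \<forall>b\<in>S. \<bar>G (a, b)\<bar> \<le> C"
  shows "(\<integral>b. (\<integral>a. G (a, b) \<partial>F) \<partial>F) = 0"
proof -
  have p: "prob_space F" and s: "sets F = sets (restrict_space borel S)"
    using F by (auto simp: mixed_strategies_def)
  have sp: "space F = S" by (rule mixed_space[OF F])
  interpret P: prob_space F by (rule p)
  interpret PP: pair_prob_space F F ..
  have m: "G \<in> borel_measurable (F \<Otimes>\<^sub>M F)" by (rule meas2[OF cG s s])
  have int: "integrable (F \<Otimes>\<^sub>M F) (case_prod (\<lambda>a b. G (a, b)))"
  proof (rule PP.integrable_const_bound[where B=C])
    show "AE x in F \<Otimes>\<^sub>M F. norm (case x of (a, b) \<Rightarrow> G (a, b)) \<le> C"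
      using bd by (intro AE_I2) (auto simp: space_pair_measure sp)
    show "(\<lambda>x. case x of (a, b) \<Rightarrow> G (a, b)) \<in> borel_measurable (F \<Otimes>\<^sub>M F)"
      using m by simp
  qed
  have "(\<integral>b. (\<integral>a. G (a, b) \<partial>F) \<partial>F) = (\<integral>a. (\<integral>b. G (a, b) \<partial>F) \<partial>F)"
    by (rule PP.Fubini_integral[OF int])
  also have "\<dots> = (\<integral>a. (\<integral>b. - G (b, a) \<partial>F) \<partial>F)"
  proof (rule Bochner_Integration.integral_cong[OF HOL.refl])
    fix a assume a: "a \<in> space F"
    show "(\<integral>b. G (a, b) \<partial>F) = (\<integral>b. - G (b, a) \<partial>F)"
    proof (rule Bochner_Integration.integral_cong[OF HOL.refl])
      fix b assume "b \<in> space F"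
      then show "G (a, b) = - G (b, a)" using a anti unfolding sp by blast
    qed
  qed
  also have "\<dots> = - (\<integral>a. (\<integral>b. G (b, a) \<partial>F) \<partial>F)" by simp
  finally show ?thesis by simp
qed



lemma symm_finite_game:
  fixes K :: "real \<times> real \<Rightarrow> real \<times> real \<Rightarrow> real"
  assumes fN: "finite N" and neN: "N \<noteq> {}" and sym: "uminus ` N = N"
    and anti: "\<forall>a\<in>N. \<forall>b\<in>N. K (-b) (-a) = - K a b"
  shows "\<exists>x\<in>stratset N. \<forall>b\<in>N. (\<Sum>a\<in>N. x a * K a b) \<le> 0"
proof -
  have memN: "-a \<in> N" if "a \<in> N" for a using sym that by force
  have "saddle N N (\<lambda>i j. - K i j)" by (rule minimax_finite[OF fN neN fN neN])
  then obtain x y v where x: "x \<in> stratset N" and y: "y \<in> stratset N"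
    and c1: "\<forall>j\<in>N. v \<le> (\<Sum>i\<in>N. x i * - K i j)"
    and c2: "\<forall>i\<in>N. (\<Sum>j\<in>N. - K i j * y j) \<le> v"
    unfolding saddle_def by blast
  define x' where "x' i = y (- i)" for i
  have reidx: "(\<Sum>i\<in>N. f (- i)) = (\<Sum>i\<in>N. f i)" for f :: "real \<times> real \<Rightarrow> real"
    by (rule sum.reindex_bij_witness[where i=uminus and j=uminus]) (auto intro: memN)
  have x': "x' \<in> stratset N"
  proof -
    have "\<forall>i. i \<notin> N \<longrightarrow> x' i = 0"
    proof (intro allI impI)
      fix i assume "i \<notin> N"
      then have "-i \<notin> N" using memN[of "-i"] by auto
      moreover have "\<forall>k. k \<notin> N \<longrightarrow> y k = 0" using y unfolding stratset_def by blast
      ultimately show "x' i = 0" unfolding x'_def by blast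
    qed
    moreover have "sum x' N = 1" using reidx[of y] y by (simp add: x'_def stratset_def)
    ultimately show ?thesis using y by (simp add: x'_def stratset_def)
  qed
  have le: "(\<Sum>i\<in>N. x' i * (\<Sum>j\<in>N. - K i j * y j)) \<le> v"
    by (rule stratset_avg_le[OF x' c2])
  define S0 where "S0 = (\<Sum>i\<in>N. \<Sum>j\<in>N. y i * K (- i) j * y j)"
  have e1: "(\<Sum>i\<in>N. x' i * (\<Sum>j\<in>N. - K i j * y j)) = - (\<Sum>i\<in>N. \<Sum>j\<in>N. y (- i) * K i j * y j)"
    by (simp add: x'_def sum_distrib_left sum_negf[symmetric] algebra_simps)
  have e2: "(\<Sum>i\<in>N. \<Sum>j\<in>N. y (- i) * K i j * y j) = S0"
    unfolding S0_def using reidx[of "\<lambda>i. \<Sum>j\<in>N. y i * K (- i) j * y j"] by simp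
  have e3: "S0 = - (\<Sum>i\<in>N. \<Sum>j\<in>N. y i * K (- j) i * y j)"
  proof -
    have "y i * K (- i) j * y j = - (y i * K (- j) i * y j)" if "i \<in> N" "j \<in> N" for i j
    proof -
      have "K (- i) (- (- j)) = - K (- j) i" using anti memN that by blast
      then show ?thesis by simp
    qed
    then show ?thesis unfolding S0_def by (simp add: sum_negf[symmetric])
  qed
  have e4: "(\<Sum>i\<in>N. \<Sum>j\<in>N. y i * K (- j) i * y j) = S0"
    unfolding S0_def by (subst sum.swap) (simp add: mult.commute mult.left_commute)
  have "S0 = 0" using e3 e4 by simp
  then have "0 \<le> v" using le e1 e2 by simp
  then have "\<forall>b\<in>N. (\<Sum>a\<in>N. x a * K a b) \<le> 0"
    using c1 by (auto simp: sum_negf)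
  then show ?thesis using x by blast
qed

definition fm :: "(real \<times> real) set \<Rightarrow> (real \<times> real \<Rightarrow> real) \<Rightarrow> (real \<times> real \<Rightarrow> real \<times> real) \<Rightarrow> (real \<times> real) measure" where
  "fm S x g = distr (measure_pmf (embed_pmf x)) (restrict_space borel S) (\<lambda>z. if g z \<in> S then g z else (SOME s. s \<in> S))"

lemma fm_facts:
  fixes S :: "(real \<times> real) set" and h :: "real \<times> real \<Rightarrow> real"
  assumes fN: "finite N" and NS: "g ` N \<subseteq> S" and x: "x \<in> stratset N" and neS: "S \<noteq> {}"
    and hm: "h \<in> borel_measurable (restrict_space borel S)"
  shows "fm S x g \<in> mixed_strategies S" "integral\<^sup>L (fm S x g) h = (\<Sum>a\<in>N. x a * h (g a))"
proof -
  have nn: "\<And>a. 0 \<le> x a" using x unfolding stratset_def by blast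
  have z: "\<And>a. a \<notin> N \<Longrightarrow> x a = 0" using x unfolding stratset_def by blast
  have "(\<integral>\<^sup>+a. ennreal (x a) \<partial>count_space UNIV) = (\<integral>\<^sup>+a. ennreal (x a) * indicator N a \<partial>count_space UNIV)"
    by (intro nn_integral_cong) (auto simp: indicator_def z)
  also have "\<dots> = (\<integral>\<^sup>+a. ennreal (x a) \<partial>count_space N)"
    by (simp add: nn_integral_count_space_indicator)
  also have "\<dots> = ennreal (sum x N)" using fN nn by (simp add: nn_integral_count_space_finite)
  also have "\<dots> = 1" using x by (simp add: stratset_def)
  finally have mass: "(\<integral>\<^sup>+a. ennreal (x a) \<partial>count_space UNIV) = 1" .
  have pmf: "pmf (embed_pmf x) a = x a" for a by (rule pmf_embed_pmf[OF nn mass])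
  define T where "T z = (if g z \<in> S then g z else (SOME s. s \<in> S))" for z
  have TS: "T z \<in> S" for z unfolding T_def using neS by (auto intro: someI_ex)
  have Tm: "T \<in> measurable (measure_pmf (embed_pmf x)) (restrict_space borel S)"
    using TS by (simp add: space_restrict_space)
  show "fm S x g \<in> mixed_strategies S"
    unfolding mixed_strategies_def fm_def T_def[symmetric]
    using measure_pmf.prob_space_distr[OF Tm] by simp
  have "integral\<^sup>L (fm S x g) h = (\<integral>z. h (T z) \<partial>measure_pmf (embed_pmf x))"
    unfolding fm_def T_def[symmetric] by (rule integral_distr[OF Tm hm])
  also have "\<dots> = (\<Sum>a\<in>N. pmf (embed_pmf x) a *\<^sub>R h (T a))"
    by (rule integral_measure_pmf[OF fN]) (metis set_pmf_iff pmf z)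
  also have "\<dots> = (\<Sum>a\<in>N. x a * h (g a))"
    using NS by (intro sum.cong) (auto simp: pmf T_def)
  finally show "integral\<^sup>L (fm S x g) h = (\<Sum>a\<in>N. x a * h (g a))" .
qed



lemma PF_cont_on: 
  assumes "sx > 0" "sy > 0" "-1 < r" "r < 1"
  shows "continuous_on UNIV (\<lambda>p. payoff sx sy r (fst p) (snd p))"
  using PF_cont[OF assms] by (simp add: PF_def[abs_def])

lemma eps_strategy:
  fixes S :: "(real \<times> real) set"
  assumes pos: "sx > 0" "sy > 0" "-1 < r" "r < 1"
    and neS: "S \<noteq> {}" and cS: "compact S" and sym: "S = uminus ` S" and e: "\<epsilon> > 0"
  shows "\<exists>N x. finite N \<and> N \<subseteq> S \<and> uminus ` N \<subseteq> S \<and> x \<in> stratset N \<and>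
           (\<forall>b\<in>S. (\<Sum>a\<in>N. x a * payoff sx sy r a b) \<le> \<epsilon>)"
proof -
  have "uniformly_continuous_on (S \<times> S) (PF sx sy r)"
    by (rule compact_uniformly_continuous[OF continuous_on_subset[OF PF_cont[OF pos]] compact_Times[OF cS cS]]) simp
  then obtain d where d: "d > 0" and dP: "\<forall>p\<in>S \<times> S. \<forall>q\<in>S \<times> S. dist q p < d \<longrightarrow> dist (PF sx sy r q) (PF sx sy r p) < \<epsilon>"
    unfolding uniformly_continuous_on_def using e by metis
  have "S \<subseteq> (\<Union>c\<in>S. ball c d)" using d by auto
  then obtain T where T: "T \<subseteq> S" "finite T" "S \<subseteq> (\<Union>c\<in>T. ball c d)"
    using compactE_image[OF cS, where f="\<lambda>c. ball c d" and C=S] by blast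
  have memS: "-a \<in> S" if "a \<in> S" for a using sym that by (metis image_eqI minus_minus)
  define N where "N = T \<union> uminus ` T"
  have fN: "finite N" using T by (simp add: N_def)
  have NS: "N \<subseteq> S" using T memS by (auto simp: N_def)
  have nN: "uminus ` N \<subseteq> S" using T memS by (auto simp: N_def)
  have symN: "uminus ` N = N" by (auto simp: N_def image_Un image_image)
  have neN: "N \<noteq> {}" using T neS by (auto simp: N_def)
  have anti: "\<forall>a\<in>N. \<forall>b\<in>N. payoff sx sy r (-b) (-a) = - payoff sx sy r a b"
    by (simp add: payoff_antisym)
  obtain x where x: "x \<in> stratset N" and xg: "\<forall>b\<in>N. (\<Sum>a\<in>N. x a * payoff sx sy r a b) \<le> 0"
    using symm_finite_game[OF fN neN symN anti] by blast
  have nn: "\<And>a. 0 \<le> x a" using x unfolding stratset_def by blast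
  have s1: "sum x N = 1" using x unfolding stratset_def by blast
  have "\<forall>b\<in>S. (\<Sum>a\<in>N. x a * payoff sx sy r a b) \<le> \<epsilon>"
  proof
    fix b assume b: "b \<in> S"
    then obtain s where s: "s \<in> T" "dist s b < d" using T(3) by auto
    have sN: "s \<in> N" using s by (simp add: N_def)
    have close: "payoff sx sy r a b \<le> payoff sx sy r a s + \<epsilon>" if a: "a \<in> N" for a
    proof -
      have aS: "a \<in> S" using a NS by auto
      have "dist (a, b) (a, s) < d" using s by (simp add: dist_Pair_Pair dist_commute)
      then have "dist (PF sx sy r (a, b)) (PF sx sy r (a, s)) < \<epsilon>"
        using dP aS b T s by blast
      then show ?thesis by (simp add: PF_def dist_real_def)
    qed
    have "(\<Sum>a\<in>N. x a * payoff sx sy r a b) \<le> (\<Sum>a\<in>N. x a * (payoff sx sy r a s + \<epsilon>))"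
      using close nn by (intro sum_mono mult_left_mono) auto
    also have "\<dots> = (\<Sum>a\<in>N. x a * payoff sx sy r a s) + \<epsilon>"
      using s1 by (simp add: distrib_left sum.distrib sum_distrib_right[symmetric])
    also have "\<dots> \<le> \<epsilon>" using xg sN by auto
    finally show "(\<Sum>a\<in>N. x a * payoff sx sy r a b) \<le> \<epsilon>" .
  qed
  then show ?thesis using fN NS nN x by blast
qed



lemma cont_a:
  assumes "sx > 0" "sy > 0" "-1 < r" "r < 1"
    and that: "continuous_on UNIV f" "continuous_on UNIV g"
  shows "continuous_on UNIV (\<lambda>a. payoff sx sy r (f a) (g a))"
proof -
  have "continuous_on UNIV (\<lambda>a. (\<lambda>p. payoff sx sy r (fst p) (snd p)) (f a, g a))"
    by (rule continuous_on_compose2[OF PF_cont_on[OF assms(1-4)]]) (auto intro: continuous_on_Pair that)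
  then show ?thesis by simp
qed

theorem mainTheorem4:
  fixes sx sy r :: real and S :: "(real \<times> real) set"
  assumes "sx > 0" and "sy > 0" and "-1 < r" and "r < 1"
    and "S \<noteq> {}" and "compact S" and "S = uminus ` S"
  shows "(INF F1\<in>mixed_strategies S. SUP F2\<in>mixed_strategies S. mixed_payoff sx sy r F1 F2) = 0
       \<and> (SUP F2\<in>mixed_strategies S. INF F1\<in>mixed_strategies S. mixed_payoff sx sy r F1 F2) = 0"
proof -
  note pos = assms(1-4)
  note neS = assms(5) and cS = assms(6)
  define M where "M = mixed_strategies S"
  define mp where "mp = mixed_payoff sx sy r"
  have symS: "uminus ` S = S" using assms(7) by simp
  have memS: "-a \<in> S" if "a \<in> S" for a using symS that by force
  have cPF: "continuous_on (S \<times> S) (PF sx sy r)" using continuous_on_subset[OF PF_cont[OF pos]] by simp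
  have "bounded (PF sx sy r ` (S \<times> S))"
    by (rule compact_imp_bounded[OF compact_continuous_image[OF cPF compact_Times[OF cS cS]]])
  then obtain C where C0: "\<forall>z\<in>PF sx sy r ` (S \<times> S). norm z \<le> C" unfolding bounded_iff by blast
  have C: "\<bar>payoff sx sy r a b\<bar> \<le> C" if "a \<in> S" "b \<in> S" for a b
    using C0 that by (force simp: PF_def)
  have MI: "prob_space F" "sets F = sets (restrict_space borel S)" "space F = S" if "F \<in> M" for F
    using that mixed_space[of F S] by (auto simp: M_def mixed_strategies_def)
  have ca: "continuous_on UNIV (\<lambda>a. payoff sx sy r a b)" for b
    using cont_a[OF pos, of "\<lambda>a. a" "\<lambda>_. b"] by (simp add: continuous_on_id continuous_on_const)
  have bnd: "\<bar>mp F1 F2\<bar> \<le> C" if "F1 \<in> M" "F2 \<in> M" for F1 F2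
    unfolding mp_def mixed_payoff_def
  proof (rule bound_int[OF MI(1)[OF that(2)]], intro ballI)
    fix b assume "b \<in> space F2"
    then have b: "b \<in> S" using MI(3)[OF that(2)] by simp
    show "\<bar>\<integral>a. payoff sx sy r a b \<partial>F1\<bar> \<le> C"
      using C b MI(3)[OF that(1)] by (intro bound_int[OF MI(1)[OF that(1)]]) auto
  qed
  have inner_meas: "(\<lambda>b. \<integral>a. payoff sx sy r a b \<partial>F1) \<in> borel_measurable (restrict_space borel S)"
    if "F1 \<in> M" for F1
  proof -
    interpret P: prob_space F1 using MI(1)[OF that] .
    have c: "continuous_on UNIV (\<lambda>p. payoff sx sy r (snd p) (fst p))"
      by (rule cont_a[OF pos continuous_on_snd[OF continuous_on_id] continuous_on_fst[OF continuous_on_id]])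
    have "(\<lambda>p. payoff sx sy r (snd p) (fst p)) \<in> borel_measurable (restrict_space borel S \<Otimes>\<^sub>M F1)"
      by (rule meas2[OF c _ MI(2)[OF that]]) simp
    then show ?thesis by (intro P.borel_measurable_lebesgue_integral) (simp add: case_prod_beta)
  qed
  have K1: "mp F1 (refl S F1) = 0" if F1: "F1 \<in> M" for F1
  proof -
    have "mp F1 (refl S F1) = (\<integral>b. (\<integral>a. payoff sx sy r a (- b) \<partial>F1) \<partial>F1)"
      unfolding mp_def mixed_payoff_def
      by (rule refl_int[OF F1[unfolded M_def] symS inner_meas[OF F1]])
    also have "\<dots> = 0"
    proof -
      have c: "continuous_on UNIV (\<lambda>p. payoff sx sy r (fst p) (- snd p))"
        by (rule cont_a[OF pos continuous_on_fst[OF continuous_on_id] continuous_on_minus[OF continuous_on_snd[OF continuous_on_id]]])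
      have "(\<integral>b. (\<integral>a. (\<lambda>p. payoff sx sy r (fst p) (- snd p)) (a, b) \<partial>F1) \<partial>F1) = 0"
      proof (rule anti_zero[OF F1[unfolded M_def] c])
        show "\<forall>a\<in>S. \<forall>b\<in>S. payoff sx sy r (fst (a, b)) (- snd (a, b)) = - payoff sx sy r (fst (b, a)) (- snd (b, a))"
        proof (intro ballI)
          fix a b
          have "payoff sx sy r (- (- b)) (- a) = - payoff sx sy r a (- b)" by (rule payoff_antisym)
          then show "payoff sx sy r (fst (a, b)) (- snd (a, b)) = - payoff sx sy r (fst (b, a)) (- snd (b, a))"
            by (simp only: minus_minus fst_conv snd_conv)
        qed
        show "\<forall>a\<in>S. \<forall>b\<in>S. \<bar>payoff sx sy r (fst (a, b)) (- snd (a, b))\<bar> \<le> C"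
          using C memS by simp
      qed
      then show ?thesis by simp
    qed
    finally show ?thesis .
  qed
  have K2: "mp (refl S F2) F2 = 0" if F2: "F2 \<in> M" for F2
  proof -
    have "mp (refl S F2) F2 = (\<integral>b. (\<integral>a. payoff sx sy r (- a) b \<partial>F2) \<partial>F2)"
      unfolding mp_def mixed_payoff_def
    proof (rule Bochner_Integration.integral_cong[OF HOL.refl])
      fix b assume "b \<in> space F2"
      show "(\<integral>a. payoff sx sy r a b \<partial>refl S F2) = (\<integral>a. payoff sx sy r (- a) b \<partial>F2)"
        by (rule refl_int[OF F2[unfolded M_def] symS]) (rule meas1[OF ca], simp)
    qed
    also have "\<dots> = 0"
    proof -
      have c: "continuous_on UNIV (\<lambda>p. payoff sx sy r (- fst p) (snd p))"
        by (rule cont_a[OF pos continuous_on_minus[OF continuous_on_fst[OF continuous_on_id]] continuous_on_snd[OF continuous_on_id]])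
      have "(\<integral>b. (\<integral>a. (\<lambda>p. payoff sx sy r (- fst p) (snd p)) (a, b) \<partial>F2) \<partial>F2) = 0"
      proof (rule anti_zero[OF F2[unfolded M_def] c])
        show "\<forall>a\<in>S. \<forall>b\<in>S. payoff sx sy r (- fst (a, b)) (snd (a, b)) = - payoff sx sy r (- fst (b, a)) (snd (b, a))"
        proof (intro ballI)
          fix a b
          have "payoff sx sy r (- b) (- (- a)) = - payoff sx sy r (- a) b" by (rule payoff_antisym)
          then show "payoff sx sy r (- fst (a, b)) (snd (a, b)) = - payoff sx sy r (- fst (b, a)) (snd (b, a))"
            by (simp only: minus_minus fst_conv snd_conv)
        qed
        show "\<forall>a\<in>S. \<forall>b\<in>S. \<bar>payoff sx sy r (- fst (a, b)) (snd (a, b))\<bar> \<le> C"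
          using C memS by simp
      qed
      then show ?thesis by simp
    qed
    finally show ?thesis .
  qed
  have M_refl: "refl S F \<in> M" if "F \<in> M" for F
    using refl_in[OF that[unfolded M_def] symS] by (simp add: M_def)
  have K34: "(\<exists>F1\<in>M. \<forall>F2\<in>M. mp F1 F2 \<le> \<epsilon>) \<and> (\<exists>F2\<in>M. \<forall>F1\<in>M. - \<epsilon> \<le> mp F1 F2)" if e: "\<epsilon> > 0" for \<epsilon>
  proof -
    obtain N x where fN: "finite N" and NS: "N \<subseteq> S" and nN: "uminus ` N \<subseteq> S"
      and x: "x \<in> stratset N" and xe: "\<forall>b\<in>S. (\<Sum>a\<in>N. x a * payoff sx sy r a b) \<le> \<epsilon>"
      using eps_strategy[OF pos neS cS assms(7) e] by blast
    have NS': "(\<lambda>z. z) ` N \<subseteq> S" using NS by simp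
    have F1: "fm S x (\<lambda>z. z) \<in> M"
      using fm_facts(1)[OF fN NS' x neS meas1[OF ca HOL.refl]] by (simp add: M_def)
    have int1: "integral\<^sup>L (fm S x (\<lambda>z. z)) (\<lambda>a. payoff sx sy r a b) = (\<Sum>a\<in>N. x a * payoff sx sy r a b)" for b
      using fm_facts(2)[OF fN NS' x neS meas1[OF ca HOL.refl]] by simp
    have A: "\<forall>F2\<in>M. mp (fm S x (\<lambda>z. z)) F2 \<le> \<epsilon>"
    proof
      fix F2 assume F2: "F2 \<in> M"
      show "mp (fm S x (\<lambda>z. z)) F2 \<le> \<epsilon>"
        unfolding mp_def mixed_payoff_def int1
        using xe MI(3)[OF F2] e by (intro le_int[OF MI(1)[OF F2]]) auto
    qed
    have F2: "fm S x uminus \<in> M"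
      using fm_facts(1)[OF fN nN x neS meas1[OF ca HOL.refl]] by (simp add: M_def)
    have B: "\<forall>F1\<in>M. - \<epsilon> \<le> mp F1 (fm S x uminus)"
    proof
      fix F1 assume F1: "F1 \<in> M"
      interpret P: prob_space F1 using MI(1)[OF F1] .
      have integ: "integrable F1 (\<lambda>a. x c * payoff sx sy r a (- c))" if "c \<in> N" for c
      proof -
        have cS: "-c \<in> S" using nN that by auto
        have "integrable F1 (\<lambda>a. payoff sx sy r a (- c))"
        proof (rule P.integrable_const_bound[where B=C])
          show "AE a in F1. norm (payoff sx sy r a (- c)) \<le> C"
            using C cS MI(3)[OF F1] by (intro AE_I2) auto
          show "(\<lambda>a. payoff sx sy r a (- c)) \<in> borel_measurable F1"
            by (rule meas1[OF ca MI(2)[OF F1]])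
        qed
        then show ?thesis by simp
      qed
      have "mp F1 (fm S x uminus) = (\<Sum>c\<in>N. x c * (\<integral>a. payoff sx sy r a (- c) \<partial>F1))"
        unfolding mp_def mixed_payoff_def by (rule fm_facts(2)[OF fN nN x neS inner_meas[OF F1]])
      also have "\<dots> = (\<Sum>c\<in>N. (\<integral>a. x c * payoff sx sy r a (- c) \<partial>F1))" by simp
      also have "\<dots> = (\<integral>a. (\<Sum>c\<in>N. x c * payoff sx sy r a (- c)) \<partial>F1)"
        using Bochner_Integration.integral_sum[where I=N and M=F1 and f="\<lambda>c a. x c * payoff sx sy r a (- c)", OF integ] by simp
      also have "- \<epsilon> \<le> \<dots>"
      proof (rule ge_int[OF MI(1)[OF F1]])
        show "0 \<le> \<epsilon>" using e by simp
        show "\<forall>a\<in>space F1. - \<epsilon> \<le> (\<Sum>c\<in>N. x c * payoff sx sy r a (- c))"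
        proof
          fix a assume "a \<in> space F1"
          then have a: "-a \<in> S" using MI(3)[OF F1] memS by auto
          have "(\<Sum>c\<in>N. x c * payoff sx sy r a (- c)) = - (\<Sum>c\<in>N. x c * payoff sx sy r c (- a))"
          proof -
            have "payoff sx sy r a (- c) = - payoff sx sy r c (- a)" for c
            proof -
              have "payoff sx sy r (- (- a)) (- c) = - payoff sx sy r c (- a)" by (rule payoff_antisym)
              then show ?thesis by (simp only: minus_minus)
            qed
            then show ?thesis by (simp add: sum_negf[symmetric])
          qed
          then show "- \<epsilon> \<le> (\<Sum>c\<in>N. x c * payoff sx sy r a (- c))" using xe a by auto
        qed
      qed
      finally show "- \<epsilon> \<le> mp F1 (fm S x uminus)" .
    qed
    show ?thesis using A B F1 F2 by blast
  qed
  obtain F0 where F0: "F0 \<in> M" using K34[of 1] by auto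
  then have neM: "M \<noteq> {}" by auto
  define phi where "phi F1 = (SUP F2\<in>M. mp F1 F2)" for F1
  define psi where "psi F2 = (INF F1\<in>M. mp F1 F2)" for F2
  have bddA: "bdd_above ((\<lambda>F2. mp F1 F2) ` M)" if "F1 \<in> M" for F1
    using bnd that by (intro bdd_aboveI[where M=C]) (auto simp: abs_le_iff)
  have bddB: "bdd_below ((\<lambda>F1. mp F1 F2) ` M)" if "F2 \<in> M" for F2
  proof (rule bdd_belowI[where m="-C"])
    fix y assume "y \<in> (\<lambda>F1. mp F1 F2) ` M"
    then obtain F1 where "F1 \<in> M" "y = mp F1 F2" by auto
    with bnd[OF this(1) that] show "- C \<le> y" by arith
  qed
  have phi0: "0 \<le> phi F1" if "F1 \<in> M" for F1
  proof -
    have "mp F1 (refl S F1) \<le> phi F1"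
      unfolding phi_def by (rule cSUP_upper[OF M_refl[OF that] bddA[OF that]])
    then show ?thesis using K1[OF that] by simp
  qed
  have psi0: "psi F2 \<le> 0" if "F2 \<in> M" for F2
  proof -
    have "psi F2 \<le> mp (refl S F2) F2"
      unfolding psi_def by (rule cINF_lower[OF bddB[OF that] M_refl[OF that]])
    then show ?thesis using K2[OF that] by simp
  qed
  have I1: "0 \<le> (INF F1\<in>M. phi F1)" using neM phi0 by (intro cINF_greatest) auto
  have I2: "(INF F1\<in>M. phi F1) \<le> \<epsilon>" if eps: "\<epsilon> > 0" for \<epsilon>
  proof -
    obtain F1 where F1: "F1 \<in> M" "\<forall>F2\<in>M. mp F1 F2 \<le> \<epsilon>" using K34[OF eps] by blast
    have "phi F1 \<le> \<epsilon>" unfolding phi_def using neM F1(2) by (intro cSUP_least) auto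
    moreover have "(INF F1\<in>M. phi F1) \<le> phi F1"
      using F1(1) phi0 by (intro cINF_lower) (auto intro: bdd_belowI[where m=0])
    ultimately show ?thesis by simp
  qed
  have S1: "(SUP F2\<in>M. psi F2) \<le> 0" using neM psi0 by (intro cSUP_least) auto
  have S2: "- \<epsilon> \<le> (SUP F2\<in>M. psi F2)" if eps: "\<epsilon> > 0" for \<epsilon>
  proof -
    obtain F2 where F2: "F2 \<in> M" "\<forall>F1\<in>M. - \<epsilon> \<le> mp F1 F2" using K34[OF eps] by blast
    have "- \<epsilon> \<le> psi F2" unfolding psi_def using neM F2(2) by (intro cINF_greatest) auto
    moreover have "psi F2 \<le> (SUP F2\<in>M. psi F2)"
      using F2(1) psi0 by (intro cSUP_upper) (auto intro: bdd_aboveI[where M=0])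
    ultimately show ?thesis by simp
  qed
  have E1: "(INF F1\<in>M. phi F1) = 0"
  proof (rule antisym[OF _ I1], rule ccontr)
    assume "\<not> (INF F1\<in>M. phi F1) \<le> 0"
    then have "(INF F1\<in>M. phi F1) > 0" by simp
    from I2[OF half_gt_zero[OF this]] this show False by simp
  qed
  have E2: "(SUP F2\<in>M. psi F2) = 0"
  proof (rule antisym[OF S1], rule ccontr)
    assume "\<not> 0 \<le> (SUP F2\<in>M. psi F2)"
    then have "- (SUP F2\<in>M. psi F2) > 0" by simp
    from S2[OF half_gt_zero[OF this]] this show False by simp
  qed
  show ?thesis using E1 E2 unfolding phi_def psi_def M_def mp_def by (rule conjI)
qed


end
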